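(* Let $q=2^k$ with $k\ge1$, and let $f(X)\in\mathbb{F}_q[X]$ be non-separable (i.e. $f'(X)=0$) of degree $n\ge 6$. Let $\Delta$ be the set of all $a\in\mathbb{F}_q$ for which $g_a(X):=(f(X+a)+f(a))/X$ equals $v(X)\circ D_s(X,b)$ for some $v(X)\in\mathbb{F}_q[X]$, some integer $s\ge 5$, and some $b\in\mathbb{F}_q^*$. If $|\Delta|>3$, then $f(X)=\rho(X)\circ X^6\circ\eta(X)$ for some degree-one $\rho(X),\eta(X)\in\mathbb{F}_q[X]$.
   Context: For $b\in\mathbb{F}_q$ and positive integer $s$, the Dickson polynomial $D_s(X,b)$ is the unique polynomial with $D_s(X+b/X,b)=X^s+b^s/X^s$; explicitly $D_s(X,b)=\sum_{i=0}^{\lfloor s/2\rfloor}\frac{s}{s-i}\binom{s-i}{i}(-b)^iX^{s-2i}$. *)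

theory Defs
  imports "HOL-Computational_Algebra.Polynomial"
begin

text \<open>The rational coefficient s/(s-i) * binom(s-i,i) is an integer (for s >= 1, i <= s/2);
  it is computed exactly in nat and then mapped into the ring.\<close>
definition dickson :: "nat \<Rightarrow> 'a::comm_ring_1 \<Rightarrow> 'a poly" where
  "dickson s b = (\<Sum>i\<le>s div 2.
      monom (of_nat (s * ((s - i) choose i) div (s - i)) * (- b) ^ i) (s - 2 * i))"

definition g_shift :: "'a::field poly \<Rightarrow> 'a \<Rightarrow> 'a poly" where
  "g_shift f a = (pcompose f [:a, 1:] + [:poly f a:]) div [:0, 1:]"

definition Delta_set :: "'a::field poly \<Rightarrow> 'a set" where
  "Delta_set f = {a. \<exists>v s b. s \<ge> 5 \<and> b \<noteq> 0 \<and> g_shift f a = pcompose v (dickson s b)}"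

end

theory Submission imports Defs "HOL-Library.Numeral_Type" "HOL-Library.Disjoint_Sets"
begin

lemma char2_of_card:
  assumes "k \<ge> 1" "card (UNIV :: 'a::{field,finite} set) = 2 ^ k"
  shows "(2::'a) = 0"
proof (rule ccontr)
  assume ne: "(2::'a) \<noteq> 0"
  define X where "X = (UNIV :: 'a set) - {0}"
  have hx: "- x \<noteq> x" if "x \<in> X" for x
  proof
    assume "- x = x"
    hence "2 * x = 0" by (metis add_eq_0_iff mult_2)
    thus False using ne that X_def by simp
  qed
  have "(\<Sum>x\<in>X. (1::2)) = 0"
    by (rule sum_involution_eq_0[where h=uminus]) (auto simp: X_def hx)
  hence "(of_nat (card X) :: 2) = 0" by simp
  hence "even (card X)" using of_nat_eq_0_iff_char_dvd[where 'a=2] by simp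
  moreover have "card X = 2^k - 1" using assms(2) by (simp add: X_def card_Diff_singleton)
  moreover have "even ((2::nat)^k)" using assms(1) by simp
  moreover have "(2::nat)^k \<ge> 1" by simp
  ultimately show False by (metis even_diff_nat odd_one le_add_diff_inverse2 dvd_add_right_iff)
qed

lemma c2_of_nat:
  assumes "(2::'a::comm_ring_1) = 0"
  shows "(of_nat n :: 'a) = (if even n then 0 else 1)"
proof (cases "even n")
  case True then obtain q where "n = 2*q" by blast
  then show ?thesis using assms True by simp
next
  case False then obtain q where "n = 2*q+1" using oddE by blast
  then show ?thesis using assms False by simp
qed

lemma c2_neg:
  assumes "(2::'a::comm_ring_1) = 0"
  shows "- (x::'a) = x"
proof -
  have "x + x = 2 * x" by simp
  hence "x + x = 0" using assms by simp
  thus ?thesis by (simp add: add_eq_0_iff)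
qed

lemma c2_sq_add:
  assumes "(2::'a::comm_ring_1) = 0"
  shows "((x::'a) + y)^2 = x^2 + y^2"
proof -
  have "(x+y)^2 = x^2 + y^2 + 2*x*y" by (simp add: power2_eq_square algebra_simps)
  thus ?thesis using assms by simp
qed

lemma c2_sq_inj:
  assumes "(2::'a::field) = 0" "(x::'a)^2 = y^2"
  shows "x = y"
proof -
  have "(x - y)^2 = x^2 + y^2 - 2*x*y" by (simp add: power2_eq_square algebra_simps)
  also have "\<dots> = x^2 + y^2" using assms(1) by simp
  also have "\<dots> = x^2 - y^2" using c2_neg[OF assms(1), of "y^2"] by (metis diff_conv_add_uminus)
  also have "\<dots> = 0" using assms(2) by simp
  finally show ?thesis by simp
qed

lemma jet_power:
  fixes R :: "'a::comm_ring_1 poly"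
  assumes "coeff R 0 = 1" "coeff R 1 = 0" "coeff R 2 = B" "coeff R 3 = 0" "coeff R 4 = C"
    "coeff R 5 = 0" "coeff R 6 = E"
  shows "coeff (R^t) 0 = 1 \<and> coeff (R^t) 1 = 0 \<and> coeff (R^t) 2 = of_nat t * B \<and>
    coeff (R^t) 3 = 0 \<and> coeff (R^t) 4 = of_nat (t choose 2) * B^2 + of_nat t * C \<and>
    coeff (R^t) 5 = 0 \<and>
    coeff (R^t) 6 = of_nat (t choose 3) * B^3 + 2 * of_nat (t choose 2) * B * C + of_nat t * E"
proof (induction t)
  case 0
  then show ?case by (simp add: numeral_eq_Suc)
next
  case (Suc t)
  have c2: "Suc t choose 2 = t + (t choose 2)" by (simp add: numeral_eq_Suc)
  have c3: "Suc t choose 3 = (t choose 2) + (t choose 3)" by (simp add: numeral_eq_Suc)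
  have e: "\<And>n. coeff (R^Suc t) n = (\<Sum>i\<le>n. coeff R i * coeff (R^t) (n - i))"
    by (simp add: coeff_mult)
  show ?case using Suc.IH assms unfolding e
    by (simp add: eval_nat_numeral c2 c3 algebra_simps power2_eq_square power3_eq_cube)
qed

lemma pcompose_monom': "pcompose (monom c i) q = smult c (q ^ i)"
proof (induction i)
  case 0 then show ?case by (simp add: monom_0)
next
  case (Suc i) then show ?case by (simp add: monom_Suc pcompose_pCons)
qed

lemma coeff_power_top:
  fixes P :: "'a::idom poly"
  assumes "P \<noteq> 0" "degree P = k"
  shows "coeff (P ^ r) x = (if x \<le> r * k then coeff (reflect_poly P ^ r) (r * k - x) else 0)"
proof -
  have d: "degree (P ^ r) = r * k" using assms by (simp add: degree_power_eq)
  show ?thesis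
  proof (cases "x \<le> r * k")
    case True
    then show ?thesis using d by (simp add: coeff_reflect_poly flip: reflect_poly_power)
  next
    case False
    then show ?thesis using d by (simp add: coeff_eq_0)
  qed
qed

lemma mod4_cases:
  fixes x :: nat
  obtains "x mod 4 = 0" "even x" "Suc x mod 4 = 1" | "x mod 4 = 1" "odd x" "Suc x mod 4 = 2"
    | "x mod 4 = 2" "even x" "Suc x mod 4 = 3" | "x mod 4 = 3" "odd x" "Suc x mod 4 = 0"
proof -
  have e: "even x \<longleftrightarrow> even (x mod 4)" by (simp add: even_mod_4_div_2 mod_mod_cancel even_iff_mod_2_eq_zero)
  have s: "Suc x mod 4 = Suc (x mod 4) mod 4" by (simp add: mod_Suc_eq)
  have "x mod 4 = 0 \<or> x mod 4 = 1 \<or> x mod 4 = 2 \<or> x mod 4 = 3" by arith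
  then show ?thesis using that e s by auto
qed

lemma even_choose2: "even (x choose 2) \<longleftrightarrow> x mod 4 < 2"
proof (induction x)
  case 0 then show ?case by (simp add: binomial_eq_0)
next
  case (Suc x)
  have "Suc x choose 2 = x + (x choose 2)" by (simp add: numeral_eq_Suc)
  then show ?case using Suc by (cases x rule: mod4_cases) auto
qed

lemma even_choose3: "even (x choose 3) \<longleftrightarrow> x mod 4 \<noteq> 3"
proof (induction x)
  case 0 then show ?case by (simp add: binomial_eq_0)
next
  case (Suc x)
  have "Suc x choose 3 = (x choose 2) + (x choose 3)" by (simp add: numeral_eq_Suc)
  then show ?case using Suc even_choose2[of x] by (cases x rule: mod4_cases) auto
qed

lemma odd5_cases:
  assumes "odd (s::nat)" "s \<ge> 5"
  obtains w where "s = 4*w+5" "s mod 4 = 1" | w where "s = 4*w+7" "s mod 4 = 3"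
proof -
  have e: "s = 4 * (s div 4) + s mod 4" by simp
  have "s mod 4 = 1 \<or> s mod 4 = 3" using assms(1) by presburger
  then show ?thesis
  proof
    assume h: "s mod 4 = 1"
    hence "s div 4 \<ge> 1" using assms(2) e by linarith
    hence "s = 4 * (s div 4 - 1) + 5" using e h by linarith
    thus ?thesis using that h by blast
  next
    assume h: "s mod 4 = 3"
    hence "s div 4 \<ge> 1" using assms(2) e by linarith
    hence "s = 4 * (s div 4 - 1) + 7" using e h by linarith
    thus ?thesis using that h by blast
  qed
qed

definition cc :: "nat \<Rightarrow> nat \<Rightarrow> nat" where
  "cc s i = s * ((s - i) choose i) div (s - i)"

lemma cc_alt:
  assumes "1 \<le> j" "j < s"
  shows "cc s j = ((s - j) choose j) + ((s - j - 1) choose (j - 1))"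
proof -
  have "j * ((s - j) choose j) = (s - j) * ((s - j - 1) choose (j - 1))"
    using times_binomial_minus1_eq[of j "s - j"] assms by simp
  hence "s * ((s - j) choose j) = (s - j) * (((s - j) choose j) + ((s - j - 1) choose (j - 1)))"
  proof -
    have "s = (s - j) + j" using assms by simp
    hence "s * ((s - j) choose j) = (s - j) * ((s - j) choose j) + j * ((s - j) choose j)"
      by (metis add_mult_distrib)
    thus ?thesis using \<open>j * _ = _\<close> by (simp add: algebra_simps)
  qed
  thus ?thesis using assms unfolding cc_def by simp
qed

lemma coeff_dickson:
  "coeff (dickson s b) k = (\<Sum>i\<le>s div 2. if s - 2 * i = k then of_nat (cc s i) * (- b) ^ i else 0)"
  unfolding dickson_def cc_def by (simp add: coeff_sum coeff_monom)

lemma coeff_dickson_at: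
  assumes "j \<le> s div 2"
  shows "coeff (dickson s b) (s - 2 * j) = of_nat (cc s j) * (- b) ^ j"
proof -
  have "coeff (dickson s b) (s - 2 * j) = (\<Sum>i\<le>s div 2. if i = j then of_nat (cc s i) * (- b) ^ i else 0)"
    unfolding coeff_dickson
    by (rule sum.cong) (use assms in auto)
  also have "\<dots> = of_nat (cc s j) * (- b) ^ j" using assms by (simp add: sum.delta)
  finally show ?thesis .
qed

lemma coeff_dickson_zero:
  assumes "\<And>i. i \<le> s div 2 \<Longrightarrow> s - 2 * i \<noteq> k"
  shows "coeff (dickson s b) k = 0"
  unfolding coeff_dickson using assms by (intro sum.neutral) auto

lemma dickson_jet:
  fixes b :: "'a::field"
  assumes c2: "(2::'a) = 0" and s5: "s \<ge> 5" and os: "odd s"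
  shows "degree (dickson s b) = s" "dickson s b \<noteq> 0"
    "coeff (reflect_poly (dickson s b)) 0 = 1"
    "coeff (reflect_poly (dickson s b)) 1 = 0"
    "coeff (reflect_poly (dickson s b)) 2 = b"
    "coeff (reflect_poly (dickson s b)) 3 = 0"
    "coeff (reflect_poly (dickson s b)) 4 = (if s mod 4 = 1 then b^2 else 0)"
    "coeff (reflect_poly (dickson s b)) 5 = 0"
    "coeff (reflect_poly (dickson s b)) 6 = (if s mod 4 = 3 then b^3 else 0)"
proof -
  let ?D = "dickson s b"
  have nb: "- b = b" using c2_neg[OF c2] .
  have ofn: "\<And>n. (of_nat n :: 'a) = (if even n then 0 else 1)" using c2_of_nat[OF c2] .
  have cs: "coeff ?D s = 1"
    using coeff_dickson_at[of 0 s b] s5 by (simp add: cc_def)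
  have hi: "coeff ?D k = 0" if "k > s" for k
    by (rule coeff_dickson_zero) (use that in auto)
  show deg: "degree ?D = s"
    by (rule order_antisym) (auto intro: degree_le le_degree simp: hi cs)
  show nz: "?D \<noteq> 0" using cs by auto
  have r: "coeff (reflect_poly ?D) l = coeff ?D (s - l)" if "l \<le> s" for l
    using that deg by (simp add: coeff_reflect_poly)
  show "coeff (reflect_poly ?D) 0 = 1" using r[of 0] cs by simp
  have "coeff ?D (s - 1) = 0"
  proof (rule coeff_dickson_zero)
    fix i assume a: "i \<le> s div 2"
    show "s - 2 * i \<noteq> s - 1"
    proof
      assume "s - 2 * i = s - 1"
      moreover have "s div 2 * 2 \<le> s" by simp
      ultimately have "2 * i = 1" using a s5 by linarith
      thus False by presburger
    qed
  qed
  then show "coeff (reflect_poly ?D) 1 = 0"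
    using r[of 1] s5 by simp
  have "coeff ?D (s - 3) = 0"
  proof (rule coeff_dickson_zero)
    fix i assume a: "i \<le> s div 2"
    show "s - 2 * i \<noteq> s - 3"
    proof
      assume "s - 2 * i = s - 3"
      moreover have "s div 2 * 2 \<le> s" by simp
      ultimately have "2 * i = 3" using a s5 by linarith
      thus False by presburger
    qed
  qed
  then show "coeff (reflect_poly ?D) 3 = 0"
    using r[of 3] s5 by simp
  have "coeff ?D (s - 5) = 0"
  proof (rule coeff_dickson_zero)
    fix i assume a: "i \<le> s div 2"
    show "s - 2 * i \<noteq> s - 5"
    proof
      assume "s - 2 * i = s - 5"
      moreover have "s div 2 * 2 \<le> s" by simp
      ultimately have "2 * i = 5" using a s5 by linarith
      thus False by presburger
    qed
  qed
  then show "coeff (reflect_poly ?D) 5 = 0"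
    using r[of 5] s5 by simp
  have cc1: "cc s 1 = s" using s5 by (simp add: cc_def)
  show "coeff (reflect_poly ?D) 2 = b"
    using r[of 2] s5 coeff_dickson_at[of 1 s b] cc1 os ofn[of s] nb by simp
  have cc2: "cc s 2 = ((s - 2) choose 2) + (s - 3)"
    using cc_alt[of 2 s] s5 by simp
  have e2: "even (cc s 2) \<longleftrightarrow> s mod 4 = 3"
  proof -
    have "even (s - 3)" using os s5 by (cases rule: odd5_cases) auto
    hence "even (cc s 2) \<longleftrightarrow> even ((s - 2) choose 2)" unfolding cc2 by simp
    also have "\<dots> \<longleftrightarrow> (s - 2) mod 4 < 2" by (rule even_choose2)
    also have "\<dots> \<longleftrightarrow> s mod 4 = 3" using os s5 by (cases rule: odd5_cases) (auto simp: mod_Suc)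
    finally show ?thesis .
  qed
  have m4: "s mod 4 = 1 \<or> s mod 4 = 3" using os by presburger
  have c4: "coeff (reflect_poly ?D) 4 = of_nat (cc s 2) * b^2"
    using r[of 4] s5 coeff_dickson_at[of 2 s b] nb by simp
  show "coeff (reflect_poly ?D) 4 = (if s mod 4 = 1 then b^2 else 0)"
    using m4 e2 ofn[of "cc s 2"] c4 by auto
  show "coeff (reflect_poly ?D) 6 = (if s mod 4 = 3 then b^3 else 0)"
  proof (cases "s = 5")
    case True
    then show ?thesis using deg by (simp add: coeff_reflect_poly)
  next
    case False
    have "s \<noteq> 6" using os by auto
    hence s7: "s \<ge> 7" using s5 False by linarith
    have cc3: "cc s 3 = ((s - 3) choose 3) + ((s - 4) choose 2)"
      using cc_alt[of 3 s] s7 by (simp add: numeral_eq_Suc)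
    have e3: "even (cc s 3) \<longleftrightarrow> s mod 4 = 1"
    proof -
      have "even (cc s 3) \<longleftrightarrow> (even ((s - 3) choose 3) \<longleftrightarrow> even ((s - 4) choose 2))"
        unfolding cc3 by simp
      also have "\<dots> \<longleftrightarrow> ((s - 3) mod 4 \<noteq> 3 \<longleftrightarrow> (s - 4) mod 4 < 2)"
        using even_choose2[of "s - 4"] even_choose3[of "s - 3"] by simp
      also have "\<dots> \<longleftrightarrow> s mod 4 = 1" using os s5 by (cases rule: odd5_cases) (use s7 in \<open>auto simp: mod_Suc\<close>)
      finally show ?thesis .
    qed
    have m4: "s mod 4 = 1 \<or> s mod 4 = 3" using os by presburger
    have c6: "coeff (reflect_poly ?D) 6 = of_nat (cc s 3) * b^3"
      using r[of 6] s7 coeff_dickson_at[of 3 s b] nb by simp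
    show ?thesis
      using m4 e3 ofn[of "cc s 3"] c6 by auto
  qed
qed

lemma coeff_pcompose_sum:
  "coeff (pcompose w P) x = (\<Sum>i\<le>degree w. coeff w i * coeff (P ^ i) x)"
proof -
  have "pcompose w P = pcompose (\<Sum>i\<le>degree w. monom (coeff w i) i) P"
    by (simp add: poly_as_sum_of_monoms)
  also have "\<dots> = (\<Sum>i\<le>degree w. smult (coeff w i) (P ^ i))"
    by (simp add: pcompose_sum pcompose_monom')
  finally show ?thesis by (simp add: coeff_sum)
qed

lemma comp_dickson_top:
  fixes b :: "'a::field"
  assumes c2: "(2::'a) = 0" and s5: "s \<ge> 5" and os: "odd s"
    and t: "degree v = t" and j: "even j" "j \<le> 6" "j \<le> t * s"
  shows "coeff (pcompose v (dickson s b)) (t * s - j) =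
           lead_coeff v * coeff (reflect_poly (dickson s b) ^ t) j"
proof -
  let ?D = "dickson s b" let ?R = "reflect_poly (dickson s b)"
  note dj = dickson_jet[OF c2 s5 os, of b]
  have jp: "coeff (?R ^ i) 1 = 0" for i
    using jet_power[OF dj(3-9)] by blast
  have top: "coeff (?D ^ i) x = (if x \<le> i * s then coeff (?R ^ i) (i * s - x) else 0)" for i x
    by (rule coeff_power_top) (use dj in auto)
  have z: "coeff v i * coeff (?D ^ i) (t * s - j) = 0" if "i < t" for i
  proof -
    have "coeff (?D ^ i) (t * s - j) = 0"
    proof (cases "t * s - j \<le> i * s")
      case False then show ?thesis using top by simp
    next
      case True
      define d where "d = t - i"
      have d: "t = i + d" "d \<ge> 1" using that unfolding d_def by auto
      have e: "t * s = i * s + d * s" using d by (simp add: add_mult_distrib)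
      have "d * s \<ge> 1 * s" using d by (intro mult_le_mono) auto
      have "d = 1"
      proof (rule ccontr)
        assume "d \<noteq> 1" hence "d \<ge> 2" using d by simp
        hence "d * s \<ge> 2 * 5" using s5 by (intro mult_le_mono) auto
        thus False using True e j by linarith
      qed
      hence e1: "t * s = i * s + s" using e by simp
      have "s \<le> j" using True e1 j by linarith
      moreover have "s \<noteq> 6" using os by auto
      moreover have "j \<noteq> 5" using j by auto
      ultimately have "s = 5" "j = 6" using s5 j by linarith+
      hence "i * s - (t * s - j) = 1" using e1 j by linarith
      then show ?thesis using True top[of i "t * s - j"] jp by simp
    qed
    thus ?thesis by simp
  qed
  have "coeff (pcompose v ?D) (t * s - j) = (\<Sum>i\<le>t. coeff v i * coeff (?D ^ i) (t * s - j))"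
    using t by (simp add: coeff_pcompose_sum)
  also have "\<dots> = coeff v t * coeff (?D ^ t) (t * s - j) + (\<Sum>i<t. coeff v i * coeff (?D ^ i) (t * s - j))"
    by (simp add: lessThan_Suc_atMost[symmetric])
  also have "\<dots> = coeff v t * coeff (?D ^ t) (t * s - j)"
    using z by (simp add: sum.neutral del: mult_eq_0_iff)
  also have "\<dots> = lead_coeff v * coeff (?R ^ t) j"
    using top[of t "t * s - j"] j t by simp
  finally show ?thesis .
qed

lemma sum_top_reindex:
  fixes P :: "'a::idom poly"
  assumes "P \<noteq> 0" "degree P = 2" "J \<le> m"
  shows "(\<Sum>i\<le>m. c i * coeff (P ^ i) (2 * m - 2 * J)) =
         (\<Sum>l\<le>J. c (m - l) * coeff (reflect_poly P ^ (m - l)) (2 * J - 2 * l))"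
proof -
  have top: "coeff (P ^ i) x = (if x \<le> i * 2 then coeff (reflect_poly P ^ i) (i * 2 - x) else 0)" for i x
    by (rule coeff_power_top) (use assms in auto)
  have "(\<Sum>i\<le>m. c i * coeff (P ^ i) (2 * m - 2 * J)) =
        (\<Sum>i\<in>{m - J..m}. c i * coeff (P ^ i) (2 * m - 2 * J))"
  proof -
    have ar: "\<not> (2 * m - 2 * J \<le> i * 2)" if "i \<le> m" "\<not> m - J \<le> i" for i
      using that by arith
    show ?thesis
      by (rule sum.mono_neutral_right) (auto simp: top ar)
  qed
  also have "\<dots> = (\<Sum>l\<le>J. c (m - l) * coeff (P ^ (m - l)) (2 * m - 2 * J))"
    by (rule sum.reindex_bij_witness[of _ "\<lambda>i. m - i" "\<lambda>l. m - l"]) (use assms in auto)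
  also have "\<dots> = (\<Sum>l\<le>J. c (m - l) * coeff (reflect_poly P ^ (m - l)) (2 * J - 2 * l))"
  proof (rule sum.cong)
    fix l assume "l \<in> {..J}"
    hence l: "l \<le> J" by simp
    have a1: "2 * m - 2 * J \<le> (m - l) * 2" using l assms by arith
    have a2: "(m - l) * 2 - (2 * m - 2 * J) = 2 * J - 2 * l" using l assms by arith
    show "c (m - l) * coeff (P ^ (m - l)) (2 * m - 2 * J) =
          c (m - l) * coeff (reflect_poly P ^ (m - l)) (2 * J - 2 * l)"
      by (simp only: top a1 a2 if_True)
  qed simp
  finally show ?thesis .
qed

lemma f_as_sum:
  fixes f :: "'a::comm_ring_1 poly"
  assumes odd0: "\<And>i. odd i \<Longrightarrow> coeff f i = 0" and n: "degree f = 2 * m"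
  shows "f = (\<Sum>i\<le>m. monom (coeff f (2 * i)) (2 * i))"
proof (rule poly_eqI)
  fix k
  have "coeff (\<Sum>i\<le>m. monom (coeff f (2 * i)) (2 * i)) k = (\<Sum>i\<le>m. if 2 * i = k then coeff f k else 0)"
    by (simp add: coeff_sum coeff_monom) (intro sum.cong, auto)
  also have "\<dots> = coeff f k"
  proof (cases "even k")
    case True
    then obtain q where q: "k = 2 * q" by blast
    have "(\<Sum>i\<le>m. if 2 * i = k then coeff f k else 0) = (\<Sum>i\<le>m. if i = q then coeff f k else 0)"
      using q by (intro sum.cong) auto
    also have "\<dots> = coeff f k"
      using q n by (auto simp: coeff_eq_0)
    finally show ?thesis .
  next
    case False
    then show ?thesis using odd0 by (auto intro!: sum.neutral)
  qed
  finally show "coeff f k = coeff (\<Sum>i\<le>m. monom (coeff f (2 * i)) (2 * i)) k" by simp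
qed

lemma shift_sq:
  fixes a :: "'a::comm_ring_1"
  assumes c2: "(2::'a) = 0"
  shows "[:a, 1:] ^ (2 * i) = [:a^2, 0, 1:] ^ i"
proof -
  have "[:a, 1:] ^ 2 = [:a^2, 2 * a, 1:]" by (simp add: power2_eq_square algebra_simps)
  hence "[:a, 1:] ^ 2 = [:a^2, 0, 1:]" using c2 by simp
  thus ?thesis by (simp add: power_mult)
qed

lemma f_shift_top:
  fixes f :: "'a::field poly"
  assumes c2: "(2::'a) = 0" and odd0: "\<And>i. odd i \<Longrightarrow> coeff f i = 0" and n: "degree f = 2 * m"
    and J: "J \<le> m"
  shows "coeff (pcompose f [:a, 1:]) (2 * m - 2 * J) =
     (\<Sum>l\<le>J. coeff f (2 * (m - l)) * coeff ([:1, 0, a^2:] ^ (m - l)) (2 * J - 2 * l))"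
proof -
  let ?P = "[:a^2, 0, 1:] :: 'a poly"
  have rP: "reflect_poly ?P = [:1, 0, a^2:]"
    by (rule poly_eqI) (auto simp: coeff_reflect_poly coeff_pCons split: nat.split)
  have "pcompose f [:a, 1:] = pcompose (\<Sum>i\<le>m. monom (coeff f (2 * i)) (2 * i)) [:a, 1:]"
    using f_as_sum[OF odd0 n] by simp
  also have "\<dots> = (\<Sum>i\<le>m. smult (coeff f (2 * i)) (?P ^ i))"
    by (simp add: pcompose_sum pcompose_monom' shift_sq[OF c2])
  finally have "coeff (pcompose f [:a, 1:]) (2 * m - 2 * J) = (\<Sum>i\<le>m. coeff f (2 * i) * coeff (?P ^ i) (2 * m - 2 * J))"
    by (simp add: coeff_sum)
  also have "\<dots> = (\<Sum>l\<le>J. coeff f (2 * (m - l)) * coeff (reflect_poly ?P ^ (m - l)) (2 * J - 2 * l))"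
    by (rule sum_top_reindex) (use J in auto)
  finally show ?thesis using rP by simp
qed

lemma div_X_coeff:
  fixes p :: "'a::field poly"
  shows "coeff (p div [:0, 1:]) k = coeff p (Suc k)"
proof -
  obtain c q where p: "p = pCons c q" by (cases p) auto
  have "p = [:c:] + [:0, 1:] * q" unfolding p by simp
  hence "p div [:0, 1:] = ([:c:] + [:0, 1:] * q) div [:0, 1:]" by simp
  also have "\<dots> = q + [:c:] div [:0, 1:]" by (rule div_mult_self2) simp
  also have "[:c:] div [:0, 1:] = 0" by (rule div_poly_less) simp
  finally show ?thesis using p by simp
qed

lemma g_shift_coeff:
  "coeff (g_shift f a) k = coeff (pcompose f [:a, 1:]) (Suc k)"
  unfolding g_shift_def by (simp add: div_X_coeff)

lemma mod4_prod:
  assumes "odd t" "odd (s::nat)" "t * s + 1 = 2 * m"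
  shows "odd m \<longleftrightarrow> t mod 4 = s mod 4"
proof -
  define N where "N = t * s"
  have N: "N mod 4 = ((t mod 4) * (s mod 4)) mod 4" unfolding N_def by (simp add: mod_mult_eq)
  have t4: "t mod 4 = 1 \<or> t mod 4 = 3" using assms(1) by presburger
  have s4: "s mod 4 = 1 \<or> s mod 4 = 3" using assms(2) by presburger
  have "odd m \<longleftrightarrow> N mod 4 = 1" using assms(3) unfolding N_def[symmetric] by presburger
  then show ?thesis using N t4 s4 by auto
qed

lemma dickson_deg:
  assumes "s \<ge> 1"
  shows "degree (dickson s (b::'a::field)) = s"
proof -
  let ?D = "dickson s b"
  have cs: "coeff ?D s = 1"
    using coeff_dickson_at[of 0 s b] assms by (simp add: cc_def)
  have hi: "coeff ?D k = 0" if "k > s" for k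
    by (rule coeff_dickson_zero) (use that in auto)
  show ?thesis
    by (rule order_antisym) (auto intro: degree_le le_degree simp: hi cs)
qed

lemma delta_facts:
  fixes f :: "'a::field poly"
  assumes c2: "(2::'a) = 0" and odd0: "\<And>i. odd i \<Longrightarrow> coeff f i = 0"
    and n: "degree f = 2 * m" and m3: "m \<ge> 3" and aD: "a \<in> Delta_set f"
  shows "coeff (pcompose f [:a,1:]) (2 * m - 2) \<noteq> 0"
    "odd m \<Longrightarrow> lead_coeff f * coeff (pcompose f [:a,1:]) (2 * m - 4) =
                  (coeff (pcompose f [:a,1:]) (2 * m - 2))^2"
    "even m \<Longrightarrow> coeff (pcompose f [:a,1:]) (2 * m - 4) = 0"
    "odd m \<Longrightarrow> m \<ge> 4 \<Longrightarrow> coeff (pcompose f [:a,1:]) (2 * m - 6) = 0"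
proof -
  obtain v s b where s5: "s \<ge> 5" and b0: "b \<noteq> 0" and gv: "g_shift f a = pcompose v (dickson s b)"
    using aD by (auto simp: Delta_set_def)
  let ?L = "lead_coeff f" let ?lin = "[:a, 1:] :: 'a poly" let ?D = "dickson s b"
  let ?F = "\<lambda>j. coeff (pcompose f ?lin) (2 * m - j)"
  have f0: "f \<noteq> 0" using n m3 by auto
  hence L0: "?L \<noteq> 0" by simp
  have dfl: "degree (pcompose f ?lin) = 2 * m" using n by (simp add: degree_pcompose)
  have dfl: "degree (pcompose f ?lin) = 2 * m" using n by (simp add: degree_pcompose)
  have lfl: "coeff (pcompose f ?lin) (2 * m) = ?L"
    using lead_coeff_comp[of ?lin f] n dfl by simp
  have gc: "coeff (pcompose v ?D) k = coeff (pcompose f ?lin) (Suc k)" for k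
    using g_shift_coeff[of f a k] gv by simp
  have dg: "degree (pcompose v ?D) = 2 * m - 1"
  proof (rule order_antisym)
    show "degree (pcompose v ?D) \<le> 2 * m - 1"
      by (rule degree_le) (use gc dfl in \<open>auto simp: coeff_eq_0\<close>)
    show "2 * m - 1 \<le> degree (pcompose v ?D)"
      by (rule le_degree) (use gc lfl L0 m3 in simp)
  qed
  define t where "t = degree v"
  have dD: "degree ?D = s" using dickson_deg[of s b] s5 by simp
  have ts: "t * s = 2 * m - 1" using dg dD by (simp add: degree_pcompose t_def)
  hence ts1: "t * s + 1 = 2 * m" using m3 by simp
  have "even (t * s + 1)" using ts1 by simp
  hence ots: "odd (t * s)" by simp
  hence ot: "odd t" and os: "odd s" by auto
  have ofn: "\<And>k. (of_nat k :: 'a) = (if even k then 0 else 1)" using c2_of_nat[OF c2] .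
  note dj = dickson_jet[OF c2 s5 os, of b]
  note JP = jet_power[OF dj(3-9), of t]
  have key: "?F j = lead_coeff v * coeff (reflect_poly ?D ^ t) j" if "even j" "j \<le> 6" "j \<le> t * s" for j
  proof -
    have ix: "Suc (t * s - j) = 2 * m - j" using that ts1 by linarith
    have "?F j = coeff (pcompose v ?D) (t * s - j)"
      using gc[of "t * s - j"] ix by simp
    also have "\<dots> = lead_coeff v * coeff (reflect_poly ?D ^ t) j"
      by (rule comp_dickson_top[OF c2 s5 os]) (use that t_def in auto)
    finally show ?thesis .
  qed
  have tsge: "t * s \<ge> 5" using ts m3 by simp
  have lv: "lead_coeff v = ?L" using key[of 0] JP lfl by simp
  have F2: "?F 2 = ?L * b" using key[of 2] JP lv tsge ofn[of t] ot by simp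
  show "?F 2 \<noteq> 0" using F2 L0 b0 by simp
  have t4: "t mod 4 = 1 \<or> t mod 4 = 3" using ot by presburger
  have s4: "s mod 4 = 1 \<or> s mod 4 = 3" using os by presburger
  have ct2: "(of_nat (t choose 2) :: 'a) = (if t mod 4 = 3 then 1 else 0)"
    using ofn[of "t choose 2"] even_choose2[of t] t4 by auto
  have ct3: "(of_nat (t choose 3) :: 'a) = (if t mod 4 = 3 then 1 else 0)"
    using ofn[of "t choose 3"] even_choose3[of t] t4 by auto
  have mo: "odd m \<longleftrightarrow> t mod 4 = s mod 4" using mod4_prod[OF ot os ts1] .
  have F4: "?F 4 = ?L * (of_nat (t choose 2) * b^2 + (if s mod 4 = 1 then b^2 else 0))"
    using key[of 4] JP lv tsge ofn[of t] ot by simp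
  have bb: "b^2 + b^2 = 0" "b^3 + b^3 = 0" using c2 by (metis mult_2 mult_zero_left)+
  show "odd m \<Longrightarrow> ?L * ?F 4 = (?F 2)^2"
    using F4 F2 ct2 mo t4 s4 by (auto simp: power2_eq_square algebra_simps)
  show "even m \<Longrightarrow> ?F 4 = 0"
    using F4 ct2 mo t4 s4 bb by auto
  assume mo1: "odd m" and m4: "m \<ge> 4"
  have F6: "?F 6 = ?L * (of_nat (t choose 3) * b^3 + 2 * of_nat (t choose 2) * b * (if s mod 4 = 1 then b^2 else 0)
     + (if s mod 4 = 3 then b^3 else 0))"
    using key[of 6] JP lv ts m4 ofn[of t] ot by simp
  show "?F 6 = 0"
    using F6 ct3 mo mo1 t4 s4 bb c2 by auto
qed

lemma cube_c2:
  assumes "(2::'a::comm_ring_1) = 0"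
  shows "[:e,0,1:]^3 = [:e^3, 0, e^2, 0, e, 0, (1::'a):]"
  using assms by (simp add: power3_eq_cube power2_eq_square algebra_simps)

lemma card_sq_roots:
  fixes Q :: "'a::field poly"
  assumes c2: "(2::'a) = 0" and Q: "Q \<noteq> 0" and fin: "finite A"
    and r: "\<And>a. a \<in> A \<Longrightarrow> poly Q (a^2) = 0"
  shows "card A \<le> degree Q"
proof -
  have inj: "inj_on (\<lambda>x::'a. x^2) A" by (auto intro: inj_onI c2_sq_inj[OF c2])
  have "card A = card ((\<lambda>x. x^2) ` A)" using card_image[OF inj] by simp
  also have "\<dots> \<le> card {y. poly Q y = 0}"
    by (rule card_mono) (use poly_roots_finite[OF Q] r in auto)
  also have "\<dots> \<le> degree Q" by (rule card_poly_roots_bound[OF Q])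
  finally show ?thesis .
qed

lemma six_form:
  fixes f :: "'a::{field,finite} poly"
  assumes c2: "(2::'a) = 0" and odd0: "\<And>i. odd i \<Longrightarrow> coeff f i = 0"
    and n: "degree f = 6" and rel: "lead_coeff f * coeff f 2 = (coeff f 4)^2"
  shows "\<exists>\<rho> \<eta>. degree \<rho> = 1 \<and> degree \<eta> = 1 \<and>
           f = pcompose \<rho> (pcompose (monom 1 6) \<eta>)"
proof -
  let ?L = "lead_coeff f"
  have "f \<noteq> 0" using n by (metis degree_0 zero_neq_numeral)
  hence L0: "?L \<noteq> 0" by simp
  have "inj (\<lambda>x::'a. x^2)" by (auto intro: injI c2_sq_inj[OF c2])
  hence "surj (\<lambda>x::'a. x^2)" using finite_UNIV_inj_surj[of "\<lambda>x::'a. x^2"] by simp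
  then obtain d where d: "d^2 = coeff f 4 / ?L" by (metis surjD)
  have f4: "coeff f 4 = ?L * d^2" using d L0 by simp
  have f2: "coeff f 2 = ?L * d^4"
  proof -
    have "?L * coeff f 2 = (?L * d^2)^2" using rel f4 by simp
    also have "\<dots> = ?L * (?L * d^4)" by (simp add: power2_eq_square algebra_simps eval_nat_numeral)
    finally show ?thesis using L0 by simp
  qed
  define c0 where "c0 = coeff f 0 + ?L * d^6"
  have fe: "f = [:coeff f 0, 0, ?L * d^4, 0, ?L * d^2, 0, ?L:]"
  proof (rule poly_eqI)
    fix k :: nat
    consider "k = 0" | "k = 1" | "k = 2" | "k = 3" | "k = 4" | "k = 5" | "k = 6" | "k > 6" by arith
    then show "coeff f k = coeff [:coeff f 0, 0, ?L * d^4, 0, ?L * d^2, 0, ?L:] k"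
      by cases (use odd0[of 1] odd0[of 3] odd0[of 5] f2 f4 n in \<open>auto simp: coeff_eq_0 coeff_pCons split: nat.split\<close>)
  qed
  have q: "pcompose (monom 1 6) [:d, 1:] = [:d^6, 0, d^4, 0, d^2, 0, 1:]"
  proof -
    have "pcompose (monom 1 6) [:d, 1:] = [:d, 1:] ^ (2 * 3)" by (simp add: pcompose_monom')
    also have "\<dots> = [:d^2, 0, 1:] ^ 3" by (rule shift_sq[OF c2])
    also have "\<dots> = [:(d^2)^3, 0, (d^2)^2, 0, d^2, 0, 1:]" by (rule cube_c2[OF c2])
    finally show ?thesis by (simp flip: power_mult)
  qed
  have dd: "?L * d^6 + ?L * d^6 = 0" using c2 by (metis mult_2 mult_zero_left)
  have "pcompose [:c0, ?L:] (pcompose (monom 1 6) [:d, 1:]) = [:coeff f 0, 0, ?L * d^4, 0, ?L * d^2, 0, ?L:]"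
    unfolding q c0_def using dd by (simp add: pcompose_pCons algebra_simps)
  hence "f = pcompose [:c0, ?L:] (pcompose (monom 1 6) [:d, 1:])" using fe by simp
  moreover have "degree [:c0, ?L:] = 1" using L0 by simp
  moreover have "degree [:d, 1::'a:] = 1" by simp
  ultimately show ?thesis by blast
qed

lemma f_shift_vals:
  fixes f :: "'a::field poly"
  assumes c2: "(2::'a) = 0" and odd0: "\<And>i. odd i \<Longrightarrow> coeff f i = 0"
    and n: "degree f = 2 * m" and m3: "m \<ge> 3"
  shows "coeff (pcompose f [:a,1:]) (2 * m - 2) = lead_coeff f * of_nat m * a^2 + coeff f (2 * m - 2)"
    "coeff (pcompose f [:a,1:]) (2 * m - 4) = lead_coeff f * of_nat (m choose 2) * a^4
        + coeff f (2 * m - 2) * of_nat (m - 1) * a^2 + coeff f (2 * m - 4)"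
    "coeff (pcompose f [:a,1:]) (2 * m - 6) = lead_coeff f * of_nat (m choose 3) * a^6
        + coeff f (2 * m - 2) * of_nat ((m - 1) choose 2) * a^4
        + coeff f (2 * m - 4) * of_nat (m - 2) * a^2 + coeff f (2 * m - 6)"
proof -
  let ?R = "[:1, 0, a^2:] :: 'a poly"
  have JP: "coeff (?R ^ r) 0 = 1 \<and> coeff (?R ^ r) 2 = of_nat r * a^2 \<and>
      coeff (?R ^ r) 4 = of_nat (r choose 2) * a^4 \<and> coeff (?R ^ r) 6 = of_nat (r choose 3) * a^6" for r
    using jet_power[of ?R "a^2" 0 0 r] by (simp add: eval_nat_numeral)
  have i1: "2 * (m - 1) = 2 * m - 2" "2 * (m - 2) = 2 * m - 4" "2 * (m - 3) = 2 * m - 6" by auto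
  have L: "coeff f (2 * m) = lead_coeff f" using n by simp
  have s1: "(\<Sum>l\<le>1. g l) = g 0 + g 1" for g :: "nat \<Rightarrow> 'a" by simp
  have s2: "(\<Sum>l\<le>2. g l) = g 0 + g 1 + g 2" for g :: "nat \<Rightarrow> 'a" by (simp add: eval_nat_numeral)
  have s3: "(\<Sum>l\<le>3. g l) = g 0 + g 1 + g 2 + g 3" for g :: "nat \<Rightarrow> 'a" by (simp add: eval_nat_numeral)
  have J1: "1 \<le> m" using m3 by simp
  note e1 = f_shift_top[OF c2 odd0 n J1, where a=a, unfolded s1]
  have J2: "2 \<le> m" using m3 by simp
  note e2 = f_shift_top[OF c2 odd0 n J2, where a=a, unfolded s2]
  have J3: "3 \<le> m" using m3 by simp
  note e3 = f_shift_top[OF c2 odd0 n J3, where a=a, unfolded s3]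
  have ar: "2 * (1::nat) = 2" "2 * (2::nat) = 4" "2 * (3::nat) = 6" "m - 0 = m" "2 * (0::nat) = 0"
    "(2::nat) - 0 = 2" "(2::nat) - 2 = 0" "(4::nat) - 0 = 4" "(4::nat) - 2 = 2" "(4::nat) - 4 = 0"
    "(6::nat) - 0 = 6" "(6::nat) - 2 = 4" "(6::nat) - 4 = 2" "(6::nat) - 6 = 0" by simp_all
  have e1': "coeff (pcompose f [:a,1:]) (2 * m - 2) = coeff f (2 * m) * coeff (?R ^ m) 2
      + coeff f (2 * m - 2) * coeff (?R ^ (m - 1)) 0"
    using e1 by (simp only: ar i1) blast
  have e2': "coeff (pcompose f [:a,1:]) (2 * m - 4) = coeff f (2 * m) * coeff (?R ^ m) 4
      + coeff f (2 * m - 2) * coeff (?R ^ (m - 1)) 2 + coeff f (2 * m - 4) * coeff (?R ^ (m - 2)) 0"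
    using e2 by (simp only: ar i1) blast
  have e3': "coeff (pcompose f [:a,1:]) (2 * m - 6) = coeff f (2 * m) * coeff (?R ^ m) 6
      + coeff f (2 * m - 2) * coeff (?R ^ (m - 1)) 4 + coeff f (2 * m - 4) * coeff (?R ^ (m - 2)) 2
      + coeff f (2 * m - 6) * coeff (?R ^ (m - 3)) 0"
    using e3 by (simp only: ar i1) blast
  show "coeff (pcompose f [:a,1:]) (2 * m - 2) = lead_coeff f * of_nat m * a^2 + coeff f (2 * m - 2)"
    unfolding e1' L using JP[of m] JP[of "m - 1"] by simp
  show "coeff (pcompose f [:a,1:]) (2 * m - 4) = lead_coeff f * of_nat (m choose 2) * a^4
        + coeff f (2 * m - 2) * of_nat (m - 1) * a^2 + coeff f (2 * m - 4)"
    unfolding e2' L using JP[of m] JP[of "m - 1"] JP[of "m - 2"] by (simp add: algebra_simps)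
  show "coeff (pcompose f [:a,1:]) (2 * m - 6) = lead_coeff f * of_nat (m choose 3) * a^6
        + coeff f (2 * m - 2) * of_nat ((m - 1) choose 2) * a^4
        + coeff f (2 * m - 4) * of_nat (m - 2) * a^2 + coeff f (2 * m - 6)"
    unfolding e3' L using JP[of m] JP[of "m - 1"] JP[of "m - 2"] JP[of "m - 3"] by (simp add: algebra_simps)
qed

theorem lemma3p3:
  fixes f :: "'a::{field,finite} poly" and k :: nat
  assumes "k \<ge> 1" and "card (UNIV :: 'a set) = 2 ^ k"
    and "pderiv f = 0"
    and "degree f \<ge> 6"
    and "card (Delta_set f) > 3"
  shows "\<exists>\<rho> \<eta>. degree \<rho> = 1 \<and> degree \<eta> = 1 \<and>
           f = pcompose \<rho> (pcompose (monom 1 6) \<eta>)"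
proof -
  have c2: "(2::'a) = 0" using char2_of_card[OF assms(1) assms(2)] .
  have ofn: "\<And>k. (of_nat k :: 'a) = (if even k then 0 else 1)" using c2_of_nat[OF c2] .
  have odd0: "coeff f i = 0" if oi: "odd i" for i
  proof -
    obtain j where j: "i = Suc j" using oi by (cases i) auto
    have "coeff (pderiv f) j = of_nat (Suc j) * coeff f (Suc j)" by (rule coeff_pderiv)
    hence "of_nat (Suc j) * coeff f (Suc j) = (0::'a)" using assms(3) by simp
    moreover have "(of_nat (Suc j) :: 'a) = 1" using ofn[of "Suc j"] oi j by simp
    ultimately show "coeff f i = 0" using j by simp
  qed
  let ?L = "lead_coeff f"
  have f0: "f \<noteq> 0" using assms(4) by auto
  hence L0: "?L \<noteq> 0" by simp
  have "even (degree f)"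
  proof (rule ccontr)
    assume "odd (degree f)"
    hence "?L = 0" using odd0 by simp
    thus False using L0 by simp
  qed
  then obtain m where n: "degree f = 2 * m" by blast
  have m3: "m \<ge> 3" using assms(4) n by simp
  let ?D = "Delta_set f"
  have finD: "finite ?D" by simp
  have cD: "card ?D > 3" using assms(5) .
  have "?D \<noteq> {}" using cD by auto
  then obtain a0 where a0: "a0 \<in> ?D" by blast
  have DF1: "\<And>a. a \<in> ?D \<Longrightarrow> coeff (pcompose f [:a,1:]) (2 * m - 2) \<noteq> 0"
    using delta_facts(1)[OF c2 odd0 n m3] by blast
  have DF2: "\<And>a. a \<in> ?D \<Longrightarrow> odd m \<Longrightarrow> lead_coeff f * coeff (pcompose f [:a,1:]) (2 * m - 4) =
                  (coeff (pcompose f [:a,1:]) (2 * m - 2))^2"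
    using delta_facts(2)[OF c2 odd0 n m3] by blast
  have DF3: "\<And>a. a \<in> ?D \<Longrightarrow> even m \<Longrightarrow> coeff (pcompose f [:a,1:]) (2 * m - 4) = 0"
    using delta_facts(3)[OF c2 odd0 n m3] by blast
  have DF4: "\<And>a. a \<in> ?D \<Longrightarrow> odd m \<Longrightarrow> m \<ge> 4 \<Longrightarrow> coeff (pcompose f [:a,1:]) (2 * m - 6) = 0"
    using delta_facts(4)[OF c2 odd0 n m3] by blast
  have FV1: "\<And>a. coeff (pcompose f [:a,1:]) (2 * m - 2) = lead_coeff f * of_nat m * a^2 + coeff f (2 * m - 2)"
    using f_shift_vals(1)[OF c2 odd0 n m3] by blast
  have FV2: "\<And>a. coeff (pcompose f [:a,1:]) (2 * m - 4) = lead_coeff f * of_nat (m choose 2) * a^4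
        + coeff f (2 * m - 2) * of_nat (m - 1) * a^2 + coeff f (2 * m - 4)"
    using f_shift_vals(2)[OF c2 odd0 n m3] by blast
  have FV3: "\<And>a. coeff (pcompose f [:a,1:]) (2 * m - 6) = lead_coeff f * of_nat (m choose 3) * a^6
        + coeff f (2 * m - 2) * of_nat ((m - 1) choose 2) * a^4
        + coeff f (2 * m - 4) * of_nat (m - 2) * a^2 + coeff f (2 * m - 6)"
    using f_shift_vals(3)[OF c2 odd0 n m3] by blast
  define f2 where "f2 = coeff f (2 * m - 2)"
  define f4 where "f4 = coeff f (2 * m - 4)"
  define f6 where "f6 = coeff f (2 * m - 6)"
  have p4: "\<And>x::'a. x^4 = x^2 * x^2" "\<And>x::'a. x^6 = x^2 * x^2 * x^2"
    by (simp_all add: eval_nat_numeral)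
  show ?thesis
  proof (cases "even m")
    case True
    have m0: "(of_nat m :: 'a) = 0" using ofn True by simp
    have m1: "(of_nat (m - 1) :: 'a) = 1" using ofn[of "m - 1"] True m3 by (simp add: even_diff_nat)
    have F2: "coeff (pcompose f [:a,1:]) (2 * m - 2) = f2" for a
      using FV1[of a] m0 by (simp add: f2_def)
    have f2nz: "f2 \<noteq> 0" using DF1[OF a0] F2[of a0] by simp
    define Q where "Q = [:f4, f2, ?L * of_nat (m choose 2):]"
    have Qnz: "Q \<noteq> 0" using f2nz by (simp add: Q_def)
    have dQ: "degree Q \<le> 2" by (simp add: Q_def)
    have "card ?D \<le> degree Q"
    proof (rule card_sq_roots[OF c2 Qnz finD])
      fix a assume aD: "a \<in> ?D"
      have "coeff (pcompose f [:a,1:]) (2 * m - 4) = 0" using DF3[OF aD True] .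
      thus "poly Q (a^2) = 0"
        using FV2[of a] m1 unfolding Q_def f2_def f4_def p4 by (simp add: algebra_simps)
    qed
    thus ?thesis using dQ cD by simp
  next
    case False
    have m1: "(of_nat m :: 'a) = 1" using ofn False by simp
    have m0: "(of_nat (m - 1) :: 'a) = 0" using ofn[of "m - 1"] False m3 by (simp add: even_diff_nat)
    have rel: "?L * (?L * of_nat (m choose 2) * a^4 + f4) = ?L * ?L * a^4 + f2^2" if aD: "a \<in> ?D" for a
    proof -
      have "?L * coeff (pcompose f [:a,1:]) (2 * m - 4) = (coeff (pcompose f [:a,1:]) (2 * m - 2))^2"
        using DF2[OF aD False] .
      hence "?L * (?L * of_nat (m choose 2) * a^4 + f4) = (?L * a^2 + f2)^2"
        using FV1[of a] FV2[of a] m1 m0 unfolding f2_def f4_def by simp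
      also have "\<dots> = (?L * a^2)^2 + f2^2" by (rule c2_sq_add[OF c2])
      also have "(?L * a^2)^2 = ?L * ?L * a^4" by (simp add: power2_eq_square p4 algebra_simps)
      finally show ?thesis .
    qed
    have "m mod 4 = 1 \<or> m mod 4 = 3" using False by presburger
    then show ?thesis
    proof
      assume m4: "m mod 4 = 1"
      have "(of_nat (m choose 2) :: 'a) = 0" using ofn[of "m choose 2"] even_choose2[of m] m4 by simp
      hence rel1: "?L * f4 = ?L * ?L * a^4 + f2^2" if "a \<in> ?D" for a
        using rel[OF that] by simp
      have "?D \<subseteq> {a0}"
      proof
        fix a assume aD: "a \<in> ?D"
        have "?L * ?L * a^4 = ?L * ?L * a0^4" using rel1[OF aD] rel1[OF a0] by (metis add_right_cancel)
        hence "a^4 = a0^4" using L0 by simp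
        hence "(a^2)^2 = (a0^2)^2" by (simp add: p4 power2_eq_square)
        hence "a^2 = a0^2" by (rule c2_sq_inj[OF c2])
        hence "a = a0" by (rule c2_sq_inj[OF c2])
        thus "a \<in> {a0}" by simp
      qed
      hence "card ?D \<le> 1" using card_mono[of "{a0}" ?D] by simp
      thus ?thesis using cD by simp
    next
      assume m4: "m mod 4 = 3"
      have c2m: "(of_nat (m choose 2) :: 'a) = 1" using ofn[of "m choose 2"] even_choose2[of m] m4 by simp
      have c3m: "(of_nat (m choose 3) :: 'a) = 1" using ofn[of "m choose 3"] even_choose3[of m] m4 by simp
      have rel3: "?L * f4 = f2^2" using rel[OF a0] c2m by (simp add: algebra_simps)
      show ?thesis
      proof (cases "m = 3")
        case True
        have "degree f = 6" using n True by simp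
        moreover have "?L * coeff f 2 = (coeff f 4)^2" using rel3 True by (simp add: f2_def f4_def)
        ultimately show ?thesis using six_form[OF c2 odd0] by blast
      next
        case False
        hence m44: "m \<ge> 4" using m3 by simp
        define Q where "Q = [:f6, f4 * of_nat (m - 2), f2 * of_nat ((m - 1) choose 2), ?L:]"
        have Qnz: "Q \<noteq> 0" using L0 by (simp add: Q_def)
        have dQ: "degree Q \<le> 3" by (simp add: Q_def)
        have "card ?D \<le> degree Q"
        proof (rule card_sq_roots[OF c2 Qnz finD])
          fix a assume aD: "a \<in> ?D"
          have "coeff (pcompose f [:a,1:]) (2 * m - 6) = 0" using DF4[OF aD \<open>odd m\<close> m44] .
          thus "poly Q (a^2) = 0"
            using FV3[of a] c3m unfolding Q_def f2_def f4_def f6_def p4 by (simp add: algebra_simps)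
        qed
        thus ?thesis using dQ cD by simp
      qed
    qed
  qed
qed

end
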